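(* Let $X$ be a regular Hausdorff space. If $X$ contains a closed subspace homeomorphic to the Arens space $S_2$, then $\mathcal{K}(X)$ contains a closed subspace homeomorphic to the sequential fan $S_\omega$.
   Context: $\mathcal{K}(X)$ is the set of nonempty compact subsets of $X$ with the Vietoris topology (base: $\langle U_1,\dots,U_k\rangle=\{K: K\subset\bigcup_i U_i,\ K\cap U_j\neq\emptyset\ \forall j\}$, $U_i$ open in $X$). The sequential fan $S_\omega$ is obtained from the topological sum of countably many convergent sequences $T_n\cup\{x_n\}$ ($T_n$ converging to $x_n$), $n\in\omega$, by identifying all $x_n$ to one point. The Arens space $S_2$ is $\{\infty\}\cup\{x_n:n\in\mathbb{N}\}\cup\{x_{n,m}\}$ with each $x_{n,m}$ isolated, basic neighborhoods of $x_n$ being $\{x_n\}\cup\{x_{n,m}: m>k\}$, and basic neighborhoods of $\infty$ being $\{\infty\}\cup\bigcup_{n>k}V_n$ with $V_n$ a neighborhood of $x_n$. *)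

theory Defs
  imports "HOL-Analysis.Analysis"
begin

definition vietoris_basic :: "'a topology \<Rightarrow> 'a set list \<Rightarrow> 'a set set" where
  "vietoris_basic X Us =
     {K. K \<noteq> {} \<and> compactin X K \<and> K \<subseteq> \<Union>(set Us) \<and> (\<forall>U\<in>set Us. K \<inter> U \<noteq> {})}"

definition vietoris :: "'a topology \<Rightarrow> 'a set topology" where
  "vietoris X = topology_generated_by
     {vietoris_basic X Us | Us. \<forall>U\<in>set Us. openin X U}"

text \<open>Sequential fan: None is the identified limit point; Some (n,m) is the m-th
  point of the n-th sequence T_n. This is the quotient topology of the sum of the
  convergent sequences, written out explicitly.\<close>
definition seq_fan :: "(nat \<times> nat) option topology" where
  "seq_fan = topology (\<lambda>U. None \<in> U \<longrightarrow>
      (\<forall>n. eventually (\<lambda>m. Some (n, m) \<in> U) sequentially))"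

text \<open>Arens space: None is \<infinity>, Some (n, None) is x_n, Some (n, Some m) is x_{n,m}.\<close>
definition arens_space :: "(nat \<times> nat option) option topology" where
  "arens_space = topology (\<lambda>U.
      (\<forall>n. Some (n, None) \<in> U \<longrightarrow> eventually (\<lambda>m. Some (n, Some m) \<in> U) sequentially) \<and>
      (None \<in> U \<longrightarrow> eventually (\<lambda>n. Some (n, None) \<in> U) sequentially))"

end

theory Submission
  imports Defs
begin

lemma openin_arens: "openin arens_space U \<longleftrightarrow>
      (\<forall>n. Some (n, None) \<in> U \<longrightarrow> eventually (\<lambda>m. Some (n, Some m) \<in> U) sequentially) \<and>
      (None \<in> U \<longrightarrow> eventually (\<lambda>n. Some (n, None) \<in> U) sequentially)"
proof -
  have "istopology (\<lambda>U.
      (\<forall>n. Some (n, None) \<in> U \<longrightarrow> eventually (\<lambda>m. Some (n, Some m) \<in> U) sequentially) \<and>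
      (None \<in> U \<longrightarrow> eventually (\<lambda>n. Some (n, None) \<in> U) sequentially))"
    unfolding istopology_def
    apply (intro conjI)
    subgoal by (auto intro: eventually_conj)
    apply (intro allI impI conjI)
    subgoal for K n by (smt (verit) UnionE UnionI eventually_mono)
    subgoal for K by (smt (verit) UnionE UnionI eventually_mono)
    done
  then show ?thesis unfolding arens_space_def by (subst topology_inverse'[OF \<open>istopology _\<close>]) (rule refl)
qed

lemma openin_seq_fan: "openin seq_fan U \<longleftrightarrow> (None \<in> U \<longrightarrow>
      (\<forall>n. eventually (\<lambda>m. Some (n, m) \<in> U) sequentially))"
proof -
  have "istopology (\<lambda>U. None \<in> U \<longrightarrow>
      (\<forall>n. eventually (\<lambda>m. Some (n, m) \<in> U) sequentially))"
    unfolding istopology_def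
    apply (intro conjI)
    subgoal by (auto intro: eventually_conj)
    apply (intro allI impI)
    subgoal for K n by (smt (verit) UnionE UnionI eventually_mono)
    done
  then show ?thesis unfolding seq_fan_def by (subst topology_inverse'[OF \<open>istopology _\<close>]) (rule refl)
qed

lemma topspace_arens [simp]: "topspace arens_space = UNIV"
proof -
  have "openin arens_space UNIV" by (simp add: openin_arens)
  from openin_subset[OF this] show ?thesis by auto
qed

lemma topspace_seq_fan [simp]: "topspace seq_fan = UNIV"
proof -
  have "openin seq_fan UNIV" by (simp add: openin_seq_fan)
  from openin_subset[OF this] show ?thesis by auto
qed

lemma arens_lim1: "limitin arens_space (\<lambda>n. Some (n, None)) None sequentially"
  unfolding limitin_def by (auto simp: openin_arens)

lemma arens_lim2: "limitin arens_space (\<lambda>m. Some (n, Some m)) (Some (n, None)) sequentially"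
  unfolding limitin_def by (auto simp: openin_arens)

lemma arens_iso: "openin arens_space {Some (n, Some m)}"
  by (auto simp: openin_arens)

lemma arens_closed: "closedin arens_space {Some (n, Some m) | n m. m < G n}"
  unfolding closedin_def openin_arens
  apply (auto simp: eventually_sequentially)
  subgoal for n by (rule exI[of _ "G n"]) auto
  done


lemma topspace_vietoris: "topspace (vietoris X) = {K. K \<noteq> {} \<and> compactin X K}"
proof (rule set_eqI, rule iffI)
  fix K assume "K \<in> topspace (vietoris X)"
  then obtain B where "B \<in> {vietoris_basic X Us | Us. \<forall>U\<in>set Us. openin X U}" "K \<in> B"
    unfolding vietoris_def topology_generated_by_topspace by blast
  then show "K \<in> {K. K \<noteq> {} \<and> compactin X K}" by (auto simp: vietoris_basic_def)
next
  fix K assume K: "K \<in> {K. K \<noteq> {} \<and> compactin X K}"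
  then have "K \<in> vietoris_basic X [topspace X]"
    using compactin_subset_topspace by (fastforce simp: vietoris_basic_def)
  moreover have "vietoris_basic X [topspace X] \<in> {vietoris_basic X Us | Us. \<forall>U\<in>set Us. openin X U}"
    by auto
  ultimately show "K \<in> topspace (vietoris X)"
    unfolding vietoris_def topology_generated_by_topspace by blast
qed

lemma openin_vietoris_basic:
  "(\<And>U. U \<in> set Us \<Longrightarrow> openin X U) \<Longrightarrow> openin (vietoris X) (vietoris_basic X Us)"
  unfolding vietoris_def by (rule topology_generated_by_Basis) blast

theorem proposition3p10:
  fixes X :: "'a topology"
  assumes "regular_space X" and "Hausdorff_space X"
    and "\<exists>S. closedin X S \<and> subtopology X S homeomorphic_space arens_space"
  shows "\<exists>C. closedin (vietoris X) C \<and> subtopology (vietoris X) C homeomorphic_space seq_fan"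
proof -
  obtain S where S: "closedin X S" and hS: "subtopology X S homeomorphic_space arens_space"
    using assms(3) by blast
  then obtain g where hg: "homeomorphic_map arens_space (subtopology X S) g"
    using homeomorphic_space_sym homeomorphic_space by blast
  have SX: "S \<subseteq> topspace X" using S closedin_subset by blast
  have gS: "range g = S"
    using homeomorphic_imp_surjective_map[OF hg] SX by auto
  have ginj: "inj g"
    using homeomorphic_imp_injective_map[OF hg] by simp
  have gcont: "continuous_map arens_space X g"
    using homeomorphic_imp_continuous_map[OF hg] continuous_map_in_subtopology by blast
  have t1: "t1_space X" using assms(2) Hausdorff_imp_t1_space by blast
  define p where "p = g None"
  define q where "q = (\<lambda>n. g (Some (n, None)))"
  define r where "r = (\<lambda>n m. g (Some (n, Some m)))"
  define T where "T = insert p (range q)"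
  have rT: "r n m \<notin> T" for n m
    using ginj unfolding T_def p_def q_def r_def by (auto dest: injD)
  have rinj: "r n m = r n' m' \<Longrightarrow> n = n' \<and> m = m'" for n m n' m'
    using ginj unfolding r_def by (auto dest: injD)
  have TS: "T \<subseteq> S" unfolding T_def p_def q_def using gS by auto
  have rS: "r n m \<in> S" for n m unfolding r_def using gS by auto
  have Sdec: "y \<in> S \<Longrightarrow> y \<notin> T \<Longrightarrow> \<exists>n m. y = r n m" for y
  proof -
    assume "y \<in> S" "y \<notin> T"
    then obtain x where x: "y = g x" using gS by auto
    show ?thesis
    proof (cases x)
      case None then show ?thesis using x \<open>y \<notin> T\<close> by (simp add: T_def p_def)
    next
      case (Some a)
      then obtain n z where a: "x = Some (n, z)" by (cases a) auto
      show ?thesis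
      proof (cases z)
        case None then show ?thesis using x a \<open>y \<notin> T\<close> by (simp add: T_def q_def)
      next
        case (Some m) then show ?thesis using x a by (auto simp: r_def)
      qed
    qed
  qed
  have qlim: "limitin X q p sequentially"
    using continuous_map_limit[OF gcont arens_lim1] by (simp add: o_def q_def p_def)
  have rlim: "limitin X (r n) (q n) sequentially" for n
    using continuous_map_limit[OF gcont arens_lim2[of n]] by (simp add: o_def q_def r_def)
  have Tcpt: "compactin X T"
    unfolding T_def
    by (rule compactin_sequence_with_limit[OF qlim]) (use TS SX in \<open>auto simp: T_def\<close>)
  have W: "\<exists>W. openin X W \<and> W \<inter> S = {r n m}" for n m
  proof -
    have "openin (subtopology X S) (g ` {Some (n, Some m)})"
      using homeomorphic_map_openness[OF hg, of "{Some (n, Some m)}"] arens_iso by simp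
    then show ?thesis unfolding openin_subtopology r_def by auto
  qed
  have E: "closedin X {r n m | n m. m < G n}" for G
  proof -
    have c1: "closedin (subtopology X S) (g ` {Some (n, Some m) | n m. m < G n})"
      using homeomorphic_map_closedness[OF hg, of "{Some (n, Some m) | n m. m < G n}"] arens_closed
      by simp
    have c2: "g ` {Some (n, Some m) | n m. m < G n} = {r n m | n m. m < G n}"
      unfolding r_def by auto
    show ?thesis using closedin_trans_full[OF c1 S] unfolding c2 .
  qed
  define \<phi> where "\<phi> = (\<lambda>x. case x of None \<Rightarrow> T | Some (n, m) \<Rightarrow> insert (r n m) T)"
  define C where "C = range \<phi>"
  have \<phi>S: "\<phi> x \<subseteq> S" for x
    using TS rS by (auto simp: \<phi>_def split: option.splits)
  have \<phi>T: "T \<subseteq> \<phi> x" for x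
    by (auto simp: \<phi>_def split: option.splits)
  have Tne: "T \<noteq> {}" by (simp add: T_def)
  have \<phi>cpt: "\<phi> x \<noteq> {} \<and> compactin X (\<phi> x)" for x
  proof (cases x)
    case None then show ?thesis using Tcpt Tne by (simp add: \<phi>_def)
  next
    case (Some a)
    then obtain n m where a: "x = Some (n, m)" by (cases a) auto
    have "compactin X ({r n m} \<union> T)"
      using compactin_Un Tcpt rS SX by (metis compactin_sing subsetD)
    then show ?thesis using a by (simp add: \<phi>_def)
  qed
  have CV: "C \<subseteq> topspace (vietoris X)"
    using \<phi>cpt by (auto simp: C_def topspace_vietoris)
  have Cclosed: "closedin (vietoris X) C"
    unfolding closedin_def
  proof (intro conjI CV)
    show "openin (vietoris X) (topspace (vietoris X) - C)"
    proof (subst openin_subopen, intro ballI)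
      fix K assume "K \<in> topspace (vietoris X) - C"
      then have Kne: "K \<noteq> {}" and Kc: "compactin X K" and KC: "K \<notin> C"
        by (auto simp: topspace_vietoris)
      have KX: "K \<subseteq> topspace X" using Kc compactin_subset_topspace by blast
      have sub: "vietoris_basic X Us \<subseteq> topspace (vietoris X) - C"
        if "\<And>c. c \<in> C \<Longrightarrow> c \<in> vietoris_basic X Us \<Longrightarrow> False" for Us
        using that by (auto simp: topspace_vietoris vietoris_basic_def)
      show "\<exists>V. openin (vietoris X) V \<and> K \<in> V \<and> V \<subseteq> topspace (vietoris X) - C"
      proof (cases "K \<subseteq> S")
        case False
        let ?Us = "[topspace X, topspace X - S]"
        have "openin (vietoris X) (vietoris_basic X ?Us)"
          by (rule openin_vietoris_basic) (use S in auto)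
        moreover have "K \<in> vietoris_basic X ?Us"
          using False Kne Kc KX by (auto simp: vietoris_basic_def)
        moreover have "vietoris_basic X ?Us \<subseteq> topspace (vietoris X) - C"
          by (rule sub) (use \<phi>S in \<open>fastforce simp: C_def vietoris_basic_def\<close>)
        ultimately show ?thesis by blast
      next
        case KS: True
        show ?thesis
        proof (cases "T \<subseteq> K")
          case False
          then obtain t where t: "t \<in> T" "t \<notin> K" by auto
          have tX: "t \<in> topspace X" using t TS SX by auto
          let ?Us = "[topspace X - {t}]"
          have "openin (vietoris X) (vietoris_basic X ?Us)"
            by (rule openin_vietoris_basic)
               (use t1 tX in \<open>auto simp: t1_space_closedin_singleton\<close>)
          moreover have "K \<in> vietoris_basic X ?Us"
            using t Kne Kc KX by (auto simp: vietoris_basic_def)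
          moreover have "vietoris_basic X ?Us \<subseteq> topspace (vietoris X) - C"
            by (rule sub) (use \<phi>T t in \<open>fastforce simp: C_def vietoris_basic_def\<close>)
          ultimately show ?thesis by blast
        next
          case TK: True
          have "\<phi> None = T" by (simp add: \<phi>_def)
          then have "T \<in> C" unfolding C_def by (metis rangeI)
          then have "K \<noteq> T" using KC by blast
          then obtain d1 where d1: "d1 \<in> K" "d1 \<notin> T" using TK by auto
          then obtain n1 m1 where n1: "d1 = r n1 m1" using Sdec KS by blast
          have "K \<noteq> \<phi> (Some (n1, m1))" using KC by (auto simp: C_def)
          then have "K \<noteq> insert d1 T" by (simp add: \<phi>_def n1)
          then obtain d2 where d2: "d2 \<in> K" "d2 \<notin> T" "d2 \<noteq> d1" using TK d1 by auto
          then obtain n2 m2 where n2: "d2 = r n2 m2" using Sdec KS by blast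
          obtain W1 where W1: "openin X W1" "W1 \<inter> S = {d1}" using W n1 by blast
          obtain W2 where W2: "openin X W2" "W2 \<inter> S = {d2}" using W n2 by blast
          let ?Us = "[topspace X, W1, W2]"
          have "openin (vietoris X) (vietoris_basic X ?Us)"
            by (rule openin_vietoris_basic) (use W1 W2 in auto)
          moreover have "K \<in> vietoris_basic X ?Us"
            using Kne Kc KX d1 d2 W1 W2 KS by (auto simp: vietoris_basic_def)
          moreover have "vietoris_basic X ?Us \<subseteq> topspace (vietoris X) - C"
          proof (rule sub)
            fix c assume "c \<in> C" "c \<in> vietoris_basic X ?Us"
            then obtain x where c: "c = \<phi> x" "c \<inter> W1 \<noteq> {}" "c \<inter> W2 \<noteq> {}"
              by (auto simp: C_def vietoris_basic_def)
            have cS: "c \<subseteq> S" using c(1) \<phi>S[of x] by simp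
            have "d1 \<in> c"
            proof -
              obtain z where z: "z \<in> c" "z \<in> W1" using c(2) by blast
              then have "z \<in> W1 \<inter> S" using cS by blast
              then show ?thesis using W1(2) z(1) by simp
            qed
            moreover have "d2 \<in> c"
            proof -
              obtain z where z: "z \<in> c" "z \<in> W2" using c(3) by blast
              then have "z \<in> W2 \<inter> S" using cS by blast
              then show ?thesis using W2(2) z(1) by simp
            qed
            ultimately show False using c d1 d2
              by (auto simp: \<phi>_def split: option.splits)
          qed
          ultimately show ?thesis by blast
        qed
      qed
    qed
  qed
  have inseq: "n = n' \<and> m = m'" if h: "insert (r n m) T = insert (r n' m') T" for n m n' m'
  proof -
    have "r n m \<in> insert (r n' m') T" using h by blast
    then have "r n m = r n' m'" using rT by blast
    then show ?thesis by (rule rinj)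
  qed
  have neq: "T \<noteq> insert (r n m) T" for n m using rT by blast
  have \<phi>inj: "inj \<phi>"
  proof (rule injI)
    fix x y assume "\<phi> x = \<phi> y"
    then show "x = y"
      using neq by (auto simp: \<phi>_def split: option.splits dest: inseq)
  qed
  have cont: "continuous_map seq_fan (vietoris X) \<phi>"
    unfolding vietoris_def
  proof (rule continuous_on_generated_topo)
    show "\<phi> ` topspace seq_fan \<subseteq> \<Union> {vietoris_basic X Us |Us. \<forall>U\<in>set Us. openin X U}"
      using CV unfolding vietoris_def topology_generated_by_topspace C_def by simp
  next
    fix B assume "B \<in> {vietoris_basic X Us |Us. \<forall>U\<in>set Us. openin X U}"
    then obtain Us where B: "B = vietoris_basic X Us" and Us: "\<forall>U\<in>set Us. openin X U" by blast
    show "openin seq_fan (\<phi> -` B \<inter> topspace seq_fan)"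
      unfolding openin_seq_fan
    proof (intro impI allI)
      fix n assume "None \<in> \<phi> -` B \<inter> topspace seq_fan"
      then have TB: "T \<in> B" by (simp add: \<phi>_def)
      then obtain U0 where U0: "U0 \<in> set Us" "q n \<in> U0"
        unfolding B vietoris_basic_def T_def by auto
      then have "eventually (\<lambda>m. r n m \<in> U0) sequentially"
        using rlim[of n] Us unfolding limitin_def by blast
      then show "eventually (\<lambda>m. Some (n, m) \<in> \<phi> -` B \<inter> topspace seq_fan) sequentially"
      proof (rule eventually_mono)
        fix m assume "r n m \<in> U0"
        then show "Some (n, m) \<in> \<phi> -` B \<inter> topspace seq_fan"
          using TB U0 \<phi>cpt[of "Some (n, m)"] unfolding B vietoris_basic_def
          by (auto simp: \<phi>_def)
      qed
    qed
  qed
  have opn: "open_map seq_fan (subtopology (vietoris X) C) \<phi>"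
    unfolding open_map_def
  proof (intro allI impI)
    fix U assume U: "openin seq_fan U"
    show "openin (subtopology (vietoris X) C) (\<phi> ` U)"
    proof (subst openin_subopen, intro ballI)
      fix y assume "y \<in> \<phi> ` U"
      then obtain x where x: "x \<in> U" "y = \<phi> x" by blast
      have key: "\<exists>V. openin (vietoris X) V \<and> \<phi> x \<in> V \<and> V \<inter> C \<subseteq> \<phi> ` U"
      proof (cases x)
        case (Some a)
        then obtain n m where a: "x = Some (n, m)" by (cases a) auto
        obtain W0 where W0: "openin X W0" "W0 \<inter> S = {r n m}" using W by blast
        let ?Us = "[topspace X, W0]"
        have "openin (vietoris X) (vietoris_basic X ?Us)"
          by (rule openin_vietoris_basic) (use W0 in auto)
        moreover have "\<phi> x \<in> vietoris_basic X ?Us"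
          using \<phi>cpt[of x] compactin_subset_topspace[of X "\<phi> x"] W0 a
          by (auto simp: vietoris_basic_def \<phi>_def)
        moreover have "vietoris_basic X ?Us \<inter> C \<subseteq> \<phi> ` U"
        proof
          fix c assume "c \<in> vietoris_basic X ?Us \<inter> C"
          then obtain z where c: "c = \<phi> z" "c \<inter> W0 \<noteq> {}"
            by (auto simp: C_def vietoris_basic_def)
          have cS: "c \<subseteq> S" using c(1) \<phi>S[of z] by simp
          have "r n m \<in> c"
          proof -
            obtain w where w: "w \<in> c" "w \<in> W0" using c(2) by blast
            then have "w \<in> W0 \<inter> S" using cS by blast
            then show ?thesis using W0(2) w(1) by simp
          qed
          then have "z = x"
          proof (cases z)
            case None then show ?thesis using \<open>r n m \<in> c\<close> c(1) rT by (simp add: \<phi>_def)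
          next
            case (Some b)
            then obtain n' m' where b: "z = Some (n', m')" by (cases b) auto
            then have "r n m \<in> insert (r n' m') T" using \<open>r n m \<in> c\<close> c(1) by (simp add: \<phi>_def)
            then have "r n m = r n' m'" using rT by blast
            then show ?thesis using rinj a b by metis
          qed
          then show "c \<in> \<phi> ` U" using c x by blast
        qed
        ultimately show ?thesis by blast
      next
        case None
        then have "\<forall>n. eventually (\<lambda>m. Some (n, m) \<in> U) sequentially"
          using U x by (simp add: openin_seq_fan)
        then have "\<forall>n. \<exists>N. \<forall>m\<ge>N. Some (n, m) \<in> U"
          by (simp add: eventually_sequentially)
        then obtain G where G: "\<And>n m. m \<ge> G n \<Longrightarrow> Some (n, m) \<in> U" by metis
        let ?E = "{r n m | n m. m < G n}"
        let ?Us = "[topspace X - ?E]"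
        have "openin (vietoris X) (vietoris_basic X ?Us)"
          by (rule openin_vietoris_basic) (use E[of G] in auto)
        moreover have "\<phi> x \<in> vietoris_basic X ?Us"
          using \<phi>cpt[of x] compactin_subset_topspace[of X "\<phi> x"] None rT Tne
          by (auto simp: vietoris_basic_def \<phi>_def)
        moreover have "vietoris_basic X ?Us \<inter> C \<subseteq> \<phi> ` U"
        proof
          fix c assume "c \<in> vietoris_basic X ?Us \<inter> C"
          then obtain z where c: "c = \<phi> z" "c \<subseteq> topspace X - ?E"
            by (auto simp: C_def vietoris_basic_def)
          show "c \<in> \<phi> ` U"
          proof (cases z)
            case None then show ?thesis using c x \<open>x = None\<close> by blast
          next
            case (Some b)
            then obtain n m where b: "z = Some (n, m)" by (cases b) auto
            have "r n m \<in> c" using c b by (simp add: \<phi>_def)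
            then have "\<not> m < G n" using c by blast
            then have "Some (n, m) \<in> U" using G by simp
            then show ?thesis using c b by blast
          qed
        qed
        ultimately show ?thesis by blast
      qed
      then obtain V where V: "openin (vietoris X) V" "\<phi> x \<in> V" "V \<inter> C \<subseteq> \<phi> ` U" by blast
      have "openin (subtopology (vietoris X) C) (V \<inter> C)"
        using V(1) openin_subtopology by blast
      moreover have "y \<in> V \<inter> C" using V x by (simp add: C_def)
      ultimately show "\<exists>T. openin (subtopology (vietoris X) C) T \<and> y \<in> T \<and> T \<subseteq> \<phi> ` U"
        using V(3) by blast
    qed
  qed
  have "homeomorphic_map seq_fan (subtopology (vietoris X) C) \<phi>"
  proof (rule bijective_open_imp_homeomorphic_map)
    show "continuous_map seq_fan (subtopology (vietoris X) C) \<phi>"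
      using cont by (simp add: continuous_map_in_subtopology C_def)
    show "open_map seq_fan (subtopology (vietoris X) C) \<phi>" by (rule opn)
    show "\<phi> ` topspace seq_fan = topspace (subtopology (vietoris X) C)"
      using CV by (auto simp: C_def)
    show "inj_on \<phi> (topspace seq_fan)" using \<phi>inj by simp
  qed
  then have "subtopology (vietoris X) C homeomorphic_space seq_fan"
    using homeomorphic_map_imp_homeomorphic_space homeomorphic_space_sym by blast
  then show ?thesis using Cclosed by blast
qed

end
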